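(* Let $\mathbf u_0,\mathbf u_1\in\Lambda_q$ with $\mathbf u_0\wedge\mathbf u_1=1$. Start with the list $L_0=(\mathbf u_0,\mathbf u_1)$, and for $n\ge0$ obtain $L_{n+1}$ from $L_n$ by replacing every pair $(\mathbf v,\mathbf w)$ of consecutive entries of $L_n$ by the $q$ vectors $x_j^q\mathbf v+y_j^q\mathbf w$, $j=0,1,\dots,q-1$ (the first and last being $\mathbf v$ and $\mathbf w$ themselves; shared endpoints are listed once). Then for every $n\ge0$, every entry of $L_n$ lies in $\Lambda_q$ and in the sector $\{\alpha\mathbf u_0+\beta\mathbf u_1:\alpha,\beta\ge0\}$, and every pair $(\mathbf v,\mathbf w)$ of consecutive entries of $L_n$ satisfies $\mathbf v\wedge\mathbf w=1$. Moreover, every element of $\Lambda_q$ lying in the sector $\{\alpha\mathbf u_0+\beta\mathbf u_1:\alpha,\beta\ge0\}$ appears in $L_n$ for some $n$.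
   Context: Fix an integer $q\ge3$, let $\lambda_q=2\cos(\pi/q)$, and let $G_q\subset \mathrm{SL}(2,\mathbb R)$ be the Hecke triangle group generated by $S=\begin{pmatrix}0&-1\\1&0\end{pmatrix}$ and $T_q=\begin{pmatrix}1&\lambda_q\\0&1\end{pmatrix}$, acting linearly on $\mathbb R^2$. Set $\Lambda_q=G_q(1,0)^T$. Let $U_q=T_qS=\begin{pmatrix}\lambda_q&-1\\1&0\end{pmatrix}$ and $(x_j^q,y_j^q)^T=U_q^j(1,0)^T$ for $j=0,\dots,q-1$. The wedge product is $(x_0,y_0)^T\wedge(x_1,y_1)^T=x_0y_1-x_1y_0$. The vectors appearing in some $L_n$ other than $\mathbf u_0,\mathbf u_1$ are called the ($G_q$-Stern–Brocot) grandchildren of $\mathbf u_0,\mathbf u_1$. *)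

theory Defs
  imports "HOL-Analysis.Analysis"
begin

text \<open>Vectors of R^2 are \<open>real^2\<close>, 2x2 real matrices are \<open>real^2^2\<close> (rows first).\<close>

definition lambda_q :: "nat \<Rightarrow> real" where
  "lambda_q q = 2 * cos (pi / real q)"

definition S_mat :: "real^2^2" where
  "S_mat = vector [vector [0, -1], vector [1, 0]]"

definition T_mat :: "nat \<Rightarrow> real^2^2" where
  "T_mat q = vector [vector [1, lambda_q q], vector [0, 1]]"

text \<open>The Hecke triangle group G_q: the subgroup of SL(2,R) generated by S and T_q,
  i.e. all finite products of S, T_q and their inverses.\<close>
inductive_set hecke_group :: "nat \<Rightarrow> (real^2^2) set" for q :: nat where
  id_in: "mat 1 \<in> hecke_group q"
| S_in: "M \<in> hecke_group q \<Longrightarrow> S_mat ** M \<in> hecke_group q"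
| S_inv_in: "M \<in> hecke_group q \<Longrightarrow> matrix_inv S_mat ** M \<in> hecke_group q"
| T_in: "M \<in> hecke_group q \<Longrightarrow> T_mat q ** M \<in> hecke_group q"
| T_inv_in: "M \<in> hecke_group q \<Longrightarrow> matrix_inv (T_mat q) ** M \<in> hecke_group q"

definition e1 :: "real^2" where
  "e1 = vector [1, 0]"

text \<open>Lambda_q = G_q (1,0)^T\<close>
definition Lambda_q :: "nat \<Rightarrow> (real^2) set" where
  "Lambda_q q = {M *v e1 | M. M \<in> hecke_group q}"

definition U_mat :: "nat \<Rightarrow> real^2^2" where
  "U_mat q = T_mat q ** S_mat"

text \<open>(x_j^q, y_j^q)^T = U_q^j (1,0)^T\<close>
definition xy_q :: "nat \<Rightarrow> nat \<Rightarrow> real^2" where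
  "xy_q q j = ((\<lambda>v. U_mat q *v v) ^^ j) e1"

definition x_q :: "nat \<Rightarrow> nat \<Rightarrow> real" where
  "x_q q j = xy_q q j $ 1"

definition y_q :: "nat \<Rightarrow> nat \<Rightarrow> real" where
  "y_q q j = xy_q q j $ 2"

definition wedge :: "real^2 \<Rightarrow> real^2 \<Rightarrow> real" where
  "wedge v w = v $ 1 * w $ 2 - w $ 1 * v $ 2"

definition sector :: "real^2 \<Rightarrow> real^2 \<Rightarrow> (real^2) set" where
  "sector u0 u1 = {a *\<^sub>R u0 + b *\<^sub>R u1 | a b. a \<ge> 0 \<and> b \<ge> 0}"

text \<open>One refinement step: each consecutive pair (v,w) is replaced by the q vectors
  x_j v + y_j w, j = 0..q-1; shared endpoints between consecutive blocks are listed once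
  (the first vector of each subsequent block is dropped).\<close>
fun refine :: "nat \<Rightarrow> (real^2) list \<Rightarrow> (real^2) list" where
  "refine q [] = []"
| "refine q [v] = [v]"
| "refine q (v # w # rest) =
     map (\<lambda>j. x_q q j *\<^sub>R v + y_q q j *\<^sub>R w) [0..<q] @ tl (refine q (w # rest))"

definition SB_list :: "nat \<Rightarrow> real^2 \<Rightarrow> real^2 \<Rightarrow> nat \<Rightarrow> (real^2) list" where
  "SB_list q u0 u1 n = (refine q ^^ n) [u0, u1]"

end

theory Submission
  imports Defs
begin


lemma vec2_eq_iff: "(v::real^2) = w \<longleftrightarrow> v$1 = w$1 \<and> v$2 = w$2"
  by (simp add: vec_eq_iff forall_2)

lemma S_act: "S_mat *v v = vector [- v$2, v$1]"
  by (simp add: vec2_eq_iff S_mat_def matrix_vector_mult_def sum_2)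

lemma T_act: "T_mat q *v v = vector [v$1 + lambda_q q * v$2, v$2]"
  by (simp add: vec2_eq_iff T_mat_def matrix_vector_mult_def sum_2)

lemma inv_unique: assumes "(A::real^2^2) ** B = mat 1" "B ** A = mat 1"
  shows "matrix_inv A = B"
proof -
  have "A ** matrix_inv A = mat 1 \<and> matrix_inv A ** A = mat 1"
    unfolding matrix_inv_def by (rule someI[of _ B]) (use assms in auto)
  hence "matrix_inv A = matrix_inv A ** (A ** B)" using assms by (simp add: matrix_mul_rid)
  also have "\<dots> = B" using \<open>_ \<and> _\<close> by (simp add: matrix_mul_assoc matrix_mul_lid)
  finally show ?thesis .
qed

lemma Sinv_mat: "matrix_inv S_mat = vector [vector [0, 1], vector [-1, 0]]"
  by (rule inv_unique) (simp_all add: S_mat_def matrix_matrix_mult_def vec_eq_iff forall_2 sum_2 mat_def)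

lemma Tinv_mat: "matrix_inv (T_mat q) = vector [vector [1, - lambda_q q], vector [0, 1]]"
  by (rule inv_unique) (simp_all add: T_mat_def matrix_matrix_mult_def vec_eq_iff forall_2 sum_2 mat_def)

lemma Sinv_act: "matrix_inv S_mat *v v = vector [v$2, - v$1]"
  by (simp add: Sinv_mat vec2_eq_iff matrix_vector_mult_def sum_2)

lemma Tinv_act: "matrix_inv (T_mat q) *v v = vector [v$1 - lambda_q q * v$2, v$2]"
  by (simp add: Tinv_mat vec2_eq_iff matrix_vector_mult_def sum_2)

lemma U_act: "U_mat q *v v = vector [lambda_q q * v$1 - v$2, v$1]"
  by (simp add: U_mat_def matrix_vector_mul_assoc[symmetric] S_act T_act)



definition sq :: "nat \<Rightarrow> nat \<Rightarrow> real" where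
  "sq q j = sin (real j * pi / real q) / sin (pi / real q)"

context fixes q :: nat assumes q3: "q \<ge> 3" begin

lemma sin_th_pos: "sin (pi / real q) > 0"
  using q3 by (intro sin_gt_zero) (auto simp: field_simps)

lemma sq0: "sq q 0 = 0" by (simp add: sq_def)
lemma sq1: "sq q 1 = 1" using sin_th_pos by (simp add: sq_def)

lemma sq_rec: "sq q (Suc (Suc j)) = lambda_q q * sq q (Suc j) - sq q j"
proof -
  define th where "th = pi / real q"
  have a: "real (Suc (Suc j)) * pi / real q = real (Suc j) * th + th"
    and b: "real j * pi / real q = real (Suc j) * th - th"
    using q3 by (simp_all add: th_def field_simps)
  define c where "c = real (Suc j) * th"
  have e: "sin (c + th) = 2 * cos th * sin c - sin (c - th)" by (simp add: sin_add sin_diff)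
  show ?thesis unfolding sq_def lambda_q_def a b th_def[symmetric] c_def[symmetric] e
    by (simp add: diff_divide_distrib c_def th_def)
qed

lemma sq_q: "sq q q = 0" using q3 by (simp add: sq_def)

lemma sq_q1: "sq q (q - 1) = 1"
proof -
  have "real (q - 1) * pi / real q = pi - pi / real q" using q3 by (simp add: of_nat_diff field_simps)
  thus ?thesis using sin_th_pos by (simp add: sq_def)
qed

lemma sq_Sq: "sq q (Suc q) = -1"
proof -
  have "real (Suc q) * pi / real q = pi / real q + pi" using q3 by (simp add: field_simps)
  thus ?thesis using sin_th_pos by (simp add: sq_def)
qed

lemma sq_q2: "sq q (q - 2) = lambda_q q"
proof -
  have "q = Suc (Suc (q - 2))" using q3 by simp
  hence "sq q q = lambda_q q * sq q (q - 1) - sq q (q - 2)"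
    by (metis sq_rec diff_Suc_1)
  thus ?thesis using sq_q sq_q1 by simp
qed

lemma sin_cmp: assumes "0 < th" "th \<le> pi/2" "th \<le> x" "x \<le> pi - th"
  shows "sin th \<le> sin x"
proof (cases "x \<le> pi/2")
  case True thus ?thesis using assms by (intro sin_monotone_2pi_le) auto
next
  case False
  have "sin th \<le> sin (pi - x)" using assms False by (intro sin_monotone_2pi_le) auto
  thus ?thesis by simp
qed

lemma sin_cmp_strict: assumes "0 < th" "th \<le> pi/2" "th < x" "x < pi - th"
  shows "sin th < sin x"
proof (cases "x \<le> pi/2")
  case True thus ?thesis using assms by (intro sin_monotone_2pi) auto
next
  case False
  have "sin th < sin (pi - x)" using assms False by (intro sin_monotone_2pi) auto
  thus ?thesis by simp
qed

lemma sq_ge1: assumes "1 \<le> j" "j \<le> q - 1" shows "1 \<le> sq q j"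
proof -
  define th where "th = pi / real q"
  define x where "x = real j * pi / real q"
  have th0: "0 < th" "th \<le> pi/2" using q3 by (auto simp: th_def field_simps)
  have jq: "real (j + 1) \<le> real q" using assms q3 by simp
  have A1: "th \<le> x" using assms by (simp add: x_def th_def field_simps)
  have "pi - th - x = (real q - 1 - real j) * pi / real q"
    using q3 by (simp add: x_def th_def field_simps)
  moreover have "0 \<le> (real q - 1 - real j) * pi / real q"
    using jq q3 by (intro divide_nonneg_pos mult_nonneg_nonneg) auto
  ultimately have "x \<le> pi - th" by linarith
  with A1 have "sin th \<le> sin x" using th0 by (intro sin_cmp) auto
  thus ?thesis using sin_th_pos by (simp add: sq_def x_def th_def)
qed

lemma sq_gt1: assumes "2 \<le> j" "j \<le> q - 2" shows "1 < sq q j"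
proof -
  define th where "th = pi / real q"
  define x where "x = real j * pi / real q"
  have th0: "0 < th" "th \<le> pi/2" using q3 by (auto simp: th_def field_simps)
  have jq: "real (j + 2) \<le> real q" using assms q3 by simp
  have "x - th = (real j - 1) * pi / real q" using q3 by (simp add: x_def th_def field_simps)
  moreover have "0 < (real j - 1) * pi / real q"
    using assms q3 by (intro divide_pos_pos mult_pos_pos) auto
  ultimately have A1: "th < x" by linarith
  have "pi - th - x = (real q - 1 - real j) * pi / real q"
    using q3 by (simp add: x_def th_def field_simps)
  moreover have "0 < (real q - 1 - real j) * pi / real q"
    using jq q3 by (intro divide_pos_pos mult_pos_pos) auto
  ultimately have "x < pi - th" by linarith
  with A1 have "sin th < sin x" using th0 by (intro sin_cmp_strict) auto
  thus ?thesis using sin_th_pos by (simp add: sq_def x_def th_def)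
qed

lemma sq_ge0: assumes "j \<le> q" shows "0 \<le> sq q j"
proof -
  have "0 \<le> sin (real j * pi / real q)"
    using assms q3 by (intro sin_ge_zero) (auto simp: field_simps)
  thus ?thesis using sin_th_pos by (simp add: sq_def)
qed

lemma lam_ge1: "1 \<le> lambda_q q"
proof -
  have "cos (pi/3) \<le> cos (pi / real q)"
    using q3 by (intro cos_monotone_0_pi_le) (auto simp: field_simps)
  thus ?thesis by (simp add: lambda_q_def cos_60)
qed

lemma xy_sq: "xy_q q j = vector [sq q (Suc j), sq q j]"
proof (induction j)
  case 0 show ?case using sq1 by (simp add: xy_q_def e1_def sq0)
next
  case (Suc j)
  have "xy_q q (Suc j) = U_mat q *v xy_q q j" by (simp add: xy_q_def)
  thus ?case using Suc by (simp add: U_act sq_rec)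
qed

lemma x_sq: "x_q q j = sq q (Suc j)" by (simp add: x_q_def xy_sq)
lemma y_sq: "y_q q j = sq q j" by (simp add: y_q_def xy_sq)

end


fun prs :: "'a list \<Rightarrow> ('a \<times> 'a) set" where
  "prs (a # b # r) = insert (a, b) (prs (b # r))"
| "prs _ = {}"

lemma prs_append: "prs (xs @ y # ys) = prs (xs @ [y]) \<union> prs (y # ys)"
proof (induction xs)
  case Nil show ?case by simp
next
  case (Cons x xs) thus ?case by (cases xs) auto
qed

lemma prs_nth_iff: "prs xs = {(xs ! i, xs ! Suc i) | i. Suc i < length xs}"
proof (induction xs rule: prs.induct)
  case (1 a b r)
  have "{((a # b # r) ! i, (a # b # r) ! Suc i) | i. Suc i < length (a # b # r)}
      = insert (a, b) {((b # r) ! i, (b # r) ! Suc i) | i. Suc i < length (b # r)}"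
    (is "?L = ?R")
  proof
    show "?L \<subseteq> ?R"
    proof
      fix p assume "p \<in> ?L"
      then obtain i where i: "p = ((a # b # r) ! i, (a # b # r) ! Suc i)" "Suc i < length (a # b # r)" by blast
      show "p \<in> ?R"
      proof (cases i)
        case 0 thus ?thesis using i by simp
      next
        case (Suc k) thus ?thesis using i by auto
      qed
    qed
    show "?R \<subseteq> ?L"
    proof
      fix p assume "p \<in> ?R"
      then consider "p = (a, b)" | i where "p = ((b # r) ! i, (b # r) ! Suc i)" "Suc i < length (b # r)" by auto
      thus "p \<in> ?L"
      proof cases
        case 1 thus ?thesis by (auto intro!: exI[of _ 0])
      next
        case 2 thus ?thesis by (auto intro!: exI[of _ "Suc i"])
      qed
    qed
  qed
  thus ?case using 1 by simp
qed auto

lemma prs_nth: "Suc i < length xs \<Longrightarrow> (xs ! i, xs ! Suc i) \<in> prs xs"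
  by (auto simp: prs_nth_iff)

lemma prs_set: "(v, w) \<in> prs xs \<Longrightarrow> v \<in> set xs \<and> w \<in> set xs"
  by (induction xs rule: prs.induct) auto

lemma set_prs: "2 \<le> length xs \<Longrightarrow> set xs = (\<Union>(v,w)\<in>prs xs. {v, w})"
proof (induction xs rule: prs.induct)
  case (1 a b r) thus ?case by (cases r) auto
qed auto

lemma prs_map_upt: "prs (map f [0..<n]) = {(f j, f (Suc j)) | j. Suc j < n}"
proof -
  have *: "\<And>i. Suc i < n \<Longrightarrow> map f [0..<n] ! i = f i \<and> map f [0..<n] ! Suc i = f (Suc i)"
    by (simp del: upt_Suc)
  show ?thesis unfolding prs_nth_iff using *
    by (auto simp del: upt_Suc) (metis *)
qed

definition cj :: "nat \<Rightarrow> real^2 \<Rightarrow> real^2 \<Rightarrow> nat \<Rightarrow> real^2" where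
  "cj q v w j = x_q q j *\<^sub>R v + y_q q j *\<^sub>R w"

definition blk :: "nat \<Rightarrow> real^2 \<Rightarrow> real^2 \<Rightarrow> (real^2) list" where
  "blk q v w = map (cj q v w) [0..<q]"

lemma blk_eq: "blk q v w = map (\<lambda>j. x_q q j *\<^sub>R v + y_q q j *\<^sub>R w) [0..<q]"
  unfolding blk_def cj_def[abs_def] ..

lemma refine_cons2: "refine q (v # w # rest) = blk q v w @ tl (refine q (w # rest))"
  by (simp add: blk_eq)

declare refine.simps(3)[simp del]
declare refine_cons2[simp]

definition Tr :: "nat \<Rightarrow> real^2 \<Rightarrow> real^2 \<Rightarrow> (real^2) set" where
  "Tr q a b = (\<Union>n. set (SB_list q a b n))"

lemma refine_map:
  assumes lin: "\<And>a b v w. f (a *\<^sub>R v + b *\<^sub>R w) = a *\<^sub>R f v + b *\<^sub>R f w"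
  shows "refine q (map f xs) = map f (refine q xs)"
  by (induction q xs rule: refine.induct) (simp_all add: lin map_tl blk_eq)

lemma refine_pow_map:
  assumes lin: "\<And>a b v w. f (a *\<^sub>R v + b *\<^sub>R w) = a *\<^sub>R f v + b *\<^sub>R f w"
  shows "(refine q ^^ n) (map f xs) = map f ((refine q ^^ n) xs)"
  by (induction n) (simp_all add: refine_map[OF lin])

lemma SB_map:
  assumes lin: "\<And>a b v w. f (a *\<^sub>R v + b *\<^sub>R w) = a *\<^sub>R f v + b *\<^sub>R f w"
  shows "SB_list q (f a) (f b) n = map f (SB_list q a b n)"
  using refine_pow_map[OF lin, where q=q and n=n and xs="[a,b]"] by (simp add: SB_list_def)

lemma Tr_map:
  assumes lin: "\<And>a b v w. f (a *\<^sub>R v + b *\<^sub>R w) = a *\<^sub>R f v + b *\<^sub>R f w"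
  shows "Tr q (f a) (f b) = f ` Tr q a b"
  by (auto simp: Tr_def SB_map[OF lin])

context fixes q :: nat assumes q3: "q \<ge> 3" begin

lemma cj0: "cj q v w 0 = v" using sq1[OF q3] by (simp add: cj_def x_sq[OF q3] y_sq[OF q3] sq0[OF q3])
lemma cjlast: "cj q v w (q - 1) = w"
proof -
  have "x_q q (q-1) = 0" unfolding x_sq[OF q3] using q3 sq_q[OF q3] by (simp add: Suc_diff_1)
  moreover have "y_q q (q-1) = 1" unfolding y_sq[OF q3] sq_q1[OF q3] by simp
  ultimately show ?thesis by (simp add: cj_def)
qed

lemma blk_split: "blk q v w = butlast (blk q v w) @ [w]" and blk_len: "length (blk q v w) = q"
  and blk_hd: "hd (blk q v w) = v"
proof -
  have ne: "blk q v w \<noteq> []" using q3 by (simp add: blk_def)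
  have "last (blk q v w) = w" using q3 cjlast by (simp add: blk_def last_map)
  thus "blk q v w = butlast (blk q v w) @ [w]" using ne by (metis append_butlast_last_id)
  show "length (blk q v w) = q" by (simp add: blk_def)
  show "hd (blk q v w) = v" using q3 cj0 by (simp add: blk_def hd_map)
qed

lemma blk_len2: "2 \<le> length (blk q a b)" using blk_len q3 by simp

lemma refine_hd: "\<exists>R. refine q (w # rest) = w # R"
proof (cases rest)
  case Nil thus ?thesis by simp
next
  case (Cons x r)
  have "blk q w x \<noteq> []" using blk_len q3 by (metis list.size(3) not_numeral_le_zero)
  thus ?thesis using blk_hd[of w x] Cons refine_cons2 by (cases "blk q w x") auto
qed

lemma refine_cons2': "refine q (v # w # rest) = butlast (blk q v w) @ refine q (w # rest)"
proof -
  obtain R where R: "refine q (w # rest) = w # R" using refine_hd by blast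
  have "refine q (v # w # rest) = blk q v w @ R" using R by (simp add: refine_cons2)
  also have "\<dots> = butlast (blk q v w) @ w # R" by (subst blk_split) simp
  finally show ?thesis using R by simp
qed

lemma refine_pair: "refine q [a, b] = blk q a b"
  by (simp add: refine_cons2)

lemma refine_key:
  "2 \<le> length xs \<Longrightarrow> prs (refine q xs) = (\<Union>(v,w)\<in>prs xs. prs (blk q v w))
     \<and> set (refine q xs) = (\<Union>(v,w)\<in>prs xs. set (blk q v w))"
proof (induction xs rule: prs.induct)
  case (1 v w rest)
  show ?case
  proof (cases rest)
    case Nil thus ?thesis by (simp add: refine_pair)
  next
    case (Cons x r)
    obtain R where R: "refine q (w # rest) = w # R" using refine_hd by blast
    have IH: "prs (refine q (w # rest)) = (\<Union>(v,w)\<in>prs (w # rest). prs (blk q v w))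
     \<and> set (refine q (w # rest)) = (\<Union>(v,w)\<in>prs (w # rest). set (blk q v w))"
      using 1(1) Cons by (simp del: refine_cons2)
    define B where "B = butlast (blk q v w)"
    have bB: "blk q v w = B @ [w]" unfolding B_def by (rule blk_split)
    have e: "refine q (v # w # rest) = B @ w # R"
      unfolding refine_cons2' R B_def ..
    have "prs (refine q (v # w # rest)) = prs (blk q v w) \<union> prs (refine q (w # rest))"
      unfolding e R bB by (rule prs_append)
    moreover have "set (refine q (v # w # rest)) = set (blk q v w) \<union> set (refine q (w # rest))"
      unfolding e R bB by auto
    ultimately show ?thesis using IH by (simp only: prs.simps(1) UN_insert prod.case)
  qed
qed simp_all

lemma refine_len: "2 \<le> length xs \<Longrightarrow> 2 \<le> length (refine q xs)"
proof (induction xs rule: prs.induct)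
  case (1 v w rest)
  have "length (blk q v w) \<le> length (refine q (v # w # rest))"
    by (simp add: refine_cons2)
  thus ?case using blk_len[of v w] q3 by simp
qed auto

lemma refine_pow_len: "2 \<le> length xs \<Longrightarrow> 2 \<le> length ((refine q ^^ n) xs)"
  by (induction n) (simp_all add: refine_len)

lemma refine_pow_set: "2 \<le> length xs \<Longrightarrow>
  set ((refine q ^^ n) xs) = (\<Union>(v,w)\<in>prs xs. set ((refine q ^^ n) [v, w]))"
proof (induction n arbitrary: xs)
  case 0 thus ?case using set_prs by simp
next
  case (Suc n)
  have l2: "2 \<le> length (refine q xs)" using refine_len Suc by simp
  have "set ((refine q ^^ Suc n) xs) = set ((refine q ^^ n) (refine q xs))"
    by (simp add: funpow_Suc_right del: funpow.simps)
  also have "\<dots> = (\<Union>(v,w)\<in>prs (refine q xs). set ((refine q ^^ n) [v, w]))"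
    using Suc.IH[OF l2] .
  also have "\<dots> = (\<Union>(a,b)\<in>prs xs. \<Union>(v,w)\<in>prs (blk q a b). set ((refine q ^^ n) [v, w]))"
    by (subst refine_key[OF Suc.prems, THEN conjunct1]) blast
  also have "\<dots> = (\<Union>(a,b)\<in>prs xs. set ((refine q ^^ n) (blk q a b)))"
    by (simp add: Suc.IH[OF blk_len2])
  also have "\<dots> = (\<Union>(a,b)\<in>prs xs. set ((refine q ^^ Suc n) [a, b]))"
    by (simp add: funpow_Suc_right refine_pair del: funpow.simps)
  finally show ?case .
qed

lemma Tr_sub: assumes "(v, w) \<in> prs (blk q a b)" shows "Tr q v w \<subseteq> Tr q a b"
proof
  fix x assume "x \<in> Tr q v w"
  then obtain n where n: "x \<in> set ((refine q ^^ n) [v, w])" by (auto simp: Tr_def SB_list_def)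
  have "set ((refine q ^^ n) (blk q a b)) = (\<Union>(v,w)\<in>prs (blk q a b). set ((refine q ^^ n) [v, w]))"
    using refine_pow_set[OF blk_len2] .
  hence "x \<in> set ((refine q ^^ n) (blk q a b))" using n assms by auto
  hence "x \<in> set ((refine q ^^ Suc n) [a, b])"
    by (simp add: funpow_Suc_right refine_pair del: funpow.simps)
  thus "x \<in> Tr q a b" unfolding Tr_def SB_list_def by blast
qed

lemma Tr_dec: "Tr q a b \<subseteq> {a, b} \<union> (\<Union>(v,w)\<in>prs (blk q a b). Tr q v w)"
proof
  fix x assume "x \<in> Tr q a b"
  then obtain n where n: "x \<in> set ((refine q ^^ n) [a, b])" by (auto simp: Tr_def SB_list_def)
  show "x \<in> {a, b} \<union> (\<Union>(v,w)\<in>prs (blk q a b). Tr q v w)"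
  proof (cases n)
    case 0 thus ?thesis using n by auto
  next
    case (Suc m)
    have "x \<in> set ((refine q ^^ m) (blk q a b))" using n Suc
      by (simp add: funpow_Suc_right refine_pair del: funpow.simps)
    also have "\<dots> = (\<Union>(v,w)\<in>prs (blk q a b). set ((refine q ^^ m) [v, w]))"
      using refine_pow_set[OF blk_len2] .
    finally obtain v w where "(v, w) \<in> prs (blk q a b)" "x \<in> set ((refine q ^^ m) [v, w])" by auto
    thus ?thesis by (auto simp: Tr_def SB_list_def)
  qed
qed

lemma Tr_ends: "a \<in> Tr q a b" "b \<in> Tr q a b"
  by (auto simp: Tr_def SB_list_def intro!: exI[of _ 0])

end


definition e2 :: "real^2" where "e2 = vector [0, 1]"

definition Einv :: "nat \<Rightarrow> real^2 \<Rightarrow> bool" where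
  "Einv q v \<longleftrightarrow> 0 \<le> v$1 \<and> 0 \<le> v$2 \<and> (v$2 = 0 \<longrightarrow> v = e1) \<and> (v$1 = 0 \<longrightarrow> v = e2)
     \<and> (v$2 = 1 \<longrightarrow> (\<exists>k::nat. v$1 = real k * lambda_q q))
     \<and> (v$1 = 1 \<longrightarrow> (\<exists>k::nat. v$2 = real k * lambda_q q))"

definition Pinv :: "nat \<Rightarrow> real^2 \<Rightarrow> real^2 \<Rightarrow> bool" where
  "Pinv q v w \<longleftrightarrow> (v = e1 \<and> w = e2)
     \<or> (v = e1 \<and> (\<exists>k::nat. 1 \<le> k \<and> w = vector [real k * lambda_q q, 1]))
     \<or> (w = e2 \<and> (\<exists>k::nat. 1 \<le> k \<and> v = vector [1, real k * lambda_q q]))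
     \<or> (1 \<le> v$1 \<and> 1 \<le> v$2 \<and> 1 \<le> w$1 \<and> 1 \<le> w$2)"

lemma cj_1: "cj q v w j $ 1 = x_q q j * v$1 + y_q q j * w$1" by (simp add: cj_def)
lemma cj_2: "cj q v w j $ 2 = x_q q j * v$2 + y_q q j * w$2" by (simp add: cj_def)

lemma e1_c[simp]: "e1 $ 1 = 1" "e1 $ 2 = 0" by (simp_all add: e1_def)
lemma e2_c[simp]: "e2 $ 1 = 0" "e2 $ 2 = 1" by (simp_all add: e2_def)

lemma Einv_big: "1 < v$1 \<Longrightarrow> 1 < v$2 \<Longrightarrow> Einv q v" by (simp add: Einv_def)

context fixes q :: nat assumes q3: "q \<ge> 3" begin

abbreviation "L \<equiv> lambda_q q"
abbreviation "s \<equiv> sq q"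

lemma cjc: "cj q v w j $ 1 = s (Suc j) * v$1 + s j * w$1" "cj q v w j $ 2 = s (Suc j) * v$2 + s j * w$2"
  by (simp_all add: cj_1 cj_2 x_sq[OF q3] y_sq[OF q3])

lemma s1: "s 1 = 1" and s2: "s 2 = L" and s0: "s 0 = 0"
  using sq1[OF q3] sq0[OF q3] sq_rec[OF q3, of 0] by (simp_all add: numeral_2_eq_2)

lemma s_ge1: "1 \<le> j \<Longrightarrow> j \<le> q - 1 \<Longrightarrow> 1 \<le> s j" using sq_ge1[OF q3] by blast
lemma s_ge0: "j \<le> q \<Longrightarrow> 0 \<le> s j" using sq_ge0[OF q3] by blast
lemma s_eq1: "1 \<le> j \<Longrightarrow> j \<le> q - 2 \<Longrightarrow> s j = 1 \<Longrightarrow> j = 1"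
  using sq_gt1[OF q3, of j] by (cases "j \<ge> 2") auto
lemma s_eq1': "2 \<le> j \<Longrightarrow> j \<le> q - 1 \<Longrightarrow> s j = 1 \<Longrightarrow> j = q - 1"
  using sq_gt1[OF q3, of j] by (cases "j \<le> q - 2") auto
lemma sqm1: "s (q - 1) = 1" using sq_q1[OF q3] .
lemma sqm2: "s (q - 2) = L" using sq_q2[OF q3] .
lemma L1: "1 \<le> L" using lam_ge1[OF q3] .

lemma kL: "1 \<le> k \<Longrightarrow> 1 \<le> real k * L"
  using L1 by (metis mult_mono' of_nat_0_le_iff of_nat_1 of_nat_mono zero_le_one mult_1_left order.trans)

lemma cj_E:
  assumes P: "Pinv q v w" and Ev: "Einv q v" and Ew: "Einv q w" and j: "j < q"
  shows "Einv q (cj q v w j)"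
proof -
  consider "j = 0" | "j = q - 1" | "1 \<le> j" "j \<le> q - 2" using j q3 by linarith
  thus ?thesis
  proof cases
    case 1 thus ?thesis using cj0[OF q3] Ev by simp
  next
    case 2 thus ?thesis using cjlast[OF q3] Ew by simp
  next
    case 3
    have sj: "1 \<le> s j" using 3 q3 by (intro s_ge1) auto
    have sj1: "1 \<le> s (Suc j)" using 3 q3 by (intro s_ge1) auto
    let ?c = "cj q v w j"
    from P consider "v = e1" "w = e2" | k where "v = e1" "1 \<le> k" "w = vector [real k * L, 1]"
      | k where "w = e2" "1 \<le> k" "v = vector [1, real k * L]"
      | "1 \<le> v$1" "1 \<le> v$2" "1 \<le> w$1" "1 \<le> w$2" unfolding Pinv_def by blast
    thus ?thesis
    proof cases
      case 1
      have c1: "?c$1 = s (Suc j)" and c2: "?c$2 = s j" using 1 by (simp_all add: cjc)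
      show ?thesis unfolding Einv_def c1 c2
      proof (intro conjI impI)
        assume "s j = 1" hence "j = 1" using 3 s_eq1 by blast
        thus "\<exists>k::nat. s (Suc j) = real k * L" using s2 by (intro exI[of _ 1]) (simp add: numeral_2_eq_2)
      next
        assume "s (Suc j) = 1" hence "Suc j = q - 1" using 3 q3 s_eq1'[of "Suc j"] by simp
        hence "j = q - 2" by simp
        thus "\<exists>k::nat. s j = real k * L" using sqm2 by (intro exI[of _ 1]) simp
      qed (use sj sj1 in auto)
    next
      case (2 k)
      have c1: "?c$1 = s (Suc j) + s j * (real k * L)" and c2: "?c$2 = s j" using 2 by (simp_all add: cjc)
      have "s j * (real k * L) \<ge> real k * L" using sj kL[OF 2(2)] by (simp add: mult_le_cancel_right1)
      hence g: "?c$1 > 1" using c1 sj1 kL[OF 2(2)] by linarith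
      show ?thesis unfolding Einv_def
      proof (intro conjI impI)
        assume "?c$2 = 1" hence "j = 1" using 3 s_eq1 c2 by simp
        thus "\<exists>k::nat. ?c$1 = real k * L" using c1 s1 s2
          by (intro exI[of _ "Suc k"]) (simp add: numeral_2_eq_2 algebra_simps)
      qed (use g c2 sj in auto)
    next
      case (3 k)
      have c1: "?c$1 = s (Suc j)" and c2: "?c$2 = s (Suc j) * (real k * L) + s j" using 3 by (simp_all add: cjc)
      have "s (Suc j) * (real k * L) \<ge> real k * L" using sj1 kL[OF 3(2)] by (simp add: mult_le_cancel_right1)
      hence g: "?c$2 > 1" using c2 sj kL[OF 3(2)] by linarith
      show ?thesis unfolding Einv_def
      proof (intro conjI impI)
        assume "?c$1 = 1" hence "Suc j = q - 1" using \<open>1 \<le> j\<close> \<open>j \<le> q - 2\<close> q3 s_eq1'[of "Suc j"] c1 by simp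
        hence a: "s (Suc j) = 1" using sqm1 by simp
        from \<open>Suc j = q - 1\<close> have "j = q - 2" by simp
        hence b: "s j = L" using sqm2 by simp
        show "\<exists>k::nat. ?c$2 = real k * L" using c2 a b
          by (intro exI[of _ "Suc k"]) (simp add: algebra_simps)
      qed (use g c1 sj1 in auto)
    next
      case 4
      have "?c$1 \<ge> s (Suc j) + s j" unfolding cjc using 4 sj sj1
        by (intro add_mono) (simp_all add: mult_le_cancel_left1)
      moreover have "?c$2 \<ge> s (Suc j) + s j" unfolding cjc using 4 sj sj1
        by (intro add_mono) (simp_all add: mult_le_cancel_left1)
      ultimately show ?thesis using sj sj1 by (intro Einv_big) auto
    qed
  qed
qed

lemma s_sum: "i < q \<Longrightarrow> 1 \<le> s (Suc i) + s i \<and> 0 \<le> s (Suc i) \<and> 0 \<le> s i"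
proof -
  assume i: "i < q"
  have a: "0 \<le> s (Suc i)" "0 \<le> s i" using i by (simp_all add: s_ge0)
  show ?thesis
  proof (cases i)
    case 0 thus ?thesis using s1 s0 by simp
  next
    case (Suc m) hence "1 \<le> s i" using i by (intro s_ge1) auto
    thus ?thesis using a by simp
  qed
qed

lemma P2_coords:
  assumes "1 \<le> v$1" "1 \<le> v$2" "1 \<le> w$1" "1 \<le> w$2" "i < q"
  shows "1 \<le> cj q v w i $ 1 \<and> 1 \<le> cj q v w i $ 2"
proof -
  have ss: "1 \<le> s (Suc i) + s i" "0 \<le> s (Suc i)" "0 \<le> s i" using s_sum assms(5) by auto
  have "s (Suc i) + s i \<le> s (Suc i) * v$1 + s i * w$1"
    using assms ss by (intro add_mono) (simp_all add: mult_le_cancel_left1)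
  moreover have "s (Suc i) + s i \<le> s (Suc i) * v$2 + s i * w$2"
    using assms ss by (intro add_mono) (simp_all add: mult_le_cancel_left1)
  ultimately show ?thesis using ss by (simp add: cjc)
qed

lemma cj_P:
  assumes P: "Pinv q v w" and j: "Suc j < q"
  shows "Pinv q (cj q v w j) (cj q v w (Suc j))"
proof -
  from P consider "v = e1" "w = e2" | k where "v = e1" "1 \<le> k" "w = vector [real k * L, 1]"
      | k where "w = e2" "1 \<le> k" "v = vector [1, real k * L]"
      | "1 \<le> v$1" "1 \<le> v$2" "1 \<le> w$1" "1 \<le> w$2" unfolding Pinv_def by blast
  thus ?thesis
  proof cases
    case 1
    have c: "\<And>i. cj q v w i = vector [s (Suc i), s i]" using 1 by (simp add: vec2_eq_iff cjc)
    consider "j = 0" | "1 \<le> j" "Suc j = q - 1" | "1 \<le> j" "Suc j \<le> q - 2" using j by linarith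
    thus ?thesis
    proof cases
      case 1
      have "cj q v w (Suc j) = vector [real 1 * L, 1]" using 1 s1 s2 by (simp add: c numeral_2_eq_2)
      moreover have "cj q v w j = e1" using 1 cj0[OF q3] \<open>v = e1\<close> by simp
      ultimately show ?thesis unfolding Pinv_def by blast
    next
      case 2
      have "j = q - 2" using 2 by simp
      hence "cj q v w j = vector [1, real 1 * L]" using 2 sqm1 sqm2 by (simp add: c)
      moreover have "cj q v w (Suc j) = e2" using 2 cjlast[OF q3] \<open>w = e2\<close> by simp
      ultimately show ?thesis unfolding Pinv_def by blast
    next
      case 3
      have "1 \<le> s j" "1 \<le> s (Suc j)" "1 \<le> s (Suc (Suc j))" using 3 by (auto intro!: s_ge1)
      thus ?thesis unfolding Pinv_def by (simp add: c)
    qed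
  next
    case (2 k)
    have c: "\<And>i. cj q v w i = vector [s (Suc i) + s i * (real k * L), s i]"
      using 2 by (simp add: vec2_eq_iff cjc)
    show ?thesis
    proof (cases "j = 0")
      case True
      have "cj q v w (Suc j) = vector [real (Suc k) * L, 1]" using True s1 s2
        by (simp add: c numeral_2_eq_2 algebra_simps)
      moreover have "cj q v w j = e1" using True cj0[OF q3] \<open>v = e1\<close> by simp
      ultimately show ?thesis unfolding Pinv_def by auto
    next
      case False
      have co: "1 \<le> cj q v w i $ 1 \<and> 1 \<le> cj q v w i $ 2" if "1 \<le> i" "i \<le> q - 1" for i
      proof -
        have a: "1 \<le> s i" using that by (rule s_ge1)
        have b: "0 \<le> s (Suc i)" using that q3 by (intro s_ge0) auto
        have "real k * L \<le> s i * (real k * L)" using a kL[OF 2(2)] by (simp add: mult_le_cancel_right1)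
        thus ?thesis using a b kL[OF 2(2)] by (simp add: c)
      qed
      show ?thesis unfolding Pinv_def using co[of j] co[of "Suc j"] False j by auto
    qed
  next
    case (3 k)
    have c: "\<And>i. cj q v w i = vector [s (Suc i), s (Suc i) * (real k * L) + s i]"
      using 3 by (simp add: vec2_eq_iff cjc)
    show ?thesis
    proof (cases "Suc j = q - 1")
      case True
      hence "j = q - 2" by simp
      hence "cj q v w j = vector [1, real (Suc k) * L]" using True sqm1 sqm2
        by (simp add: c algebra_simps)
      moreover have "cj q v w (Suc j) = e2" using True cjlast[OF q3] \<open>w = e2\<close> by simp
      ultimately show ?thesis unfolding Pinv_def using 3 by auto
    next
      case False
      have co: "1 \<le> cj q v w i $ 1 \<and> 1 \<le> cj q v w i $ 2" if "i \<le> q - 2" for i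
      proof -
        have a: "1 \<le> s (Suc i)" using that q3 by (intro s_ge1) auto
        have b: "0 \<le> s i" using that q3 by (intro s_ge0) auto
        have "real k * L \<le> s (Suc i) * (real k * L)" using a kL[OF 3(2)] by (simp add: mult_le_cancel_right1)
        thus ?thesis using a b kL[OF 3(2)] by (simp add: c)
      qed
      show ?thesis unfolding Pinv_def using co[of j] co[of "Suc j"] False j by auto
    qed
  next
    case 4
    show ?thesis unfolding Pinv_def using P2_coords[OF 4] j by auto
  qed
qed

lemma blk_prs: "prs (blk q a b) = {(cj q a b j, cj q a b (Suc j)) | j. Suc j < q}"
  by (simp add: blk_def prs_map_upt)

lemma blk_set: "set (blk q a b) = cj q a b ` {..<q}"
  by (auto simp: blk_def)

lemma Tr0_inv: "(\<forall>p\<in>prs (SB_list q e1 e2 n). Pinv q (fst p) (snd p))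
   \<and> (\<forall>x\<in>set (SB_list q e1 e2 n). Einv q x) \<and> 2 \<le> length (SB_list q e1 e2 n)"
proof (induction n)
  case 0
  have "Einv q e1" "Einv q e2" unfolding Einv_def by (auto intro: exI[of _ 0])
  thus ?case by (simp add: SB_list_def Pinv_def)
next
  case (Suc n)
  let ?xs = "SB_list q e1 e2 n"
  have eq: "SB_list q e1 e2 (Suc n) = refine q ?xs" by (simp add: SB_list_def)
  have K: "prs (refine q ?xs) = (\<Union>(v,w)\<in>prs ?xs. prs (blk q v w))"
     "set (refine q ?xs) = (\<Union>(v,w)\<in>prs ?xs. set (blk q v w))"
    using refine_key[OF q3] Suc.IH by auto
  have "\<forall>p\<in>prs (refine q ?xs). Pinv q (fst p) (snd p)"
  proof
    fix p assume "p \<in> prs (refine q ?xs)"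
    then obtain v w where vw: "(v,w) \<in> prs ?xs" "p \<in> prs (blk q v w)" using K by auto
    then obtain j where "p = (cj q v w j, cj q v w (Suc j))" "Suc j < q" by (auto simp: blk_prs)
    thus "Pinv q (fst p) (snd p)" using cj_P Suc.IH vw by auto
  qed
  moreover have "\<forall>x\<in>set (refine q ?xs). Einv q x"
  proof
    fix x assume "x \<in> set (refine q ?xs)"
    then obtain v w where vw: "(v,w) \<in> prs ?xs" "x \<in> set (blk q v w)" using K by auto
    then obtain j where "x = cj q v w j" "j < q" by (auto simp: blk_set)
    moreover have "Einv q v" "Einv q w" using prs_set[OF vw(1)] Suc.IH by auto
    ultimately show "Einv q x" using cj_E Suc.IH vw by auto
  qed
  ultimately show ?case using eq refine_len[OF q3] Suc.IH by simp
qed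

lemma Tr0_E: "x \<in> Tr q e1 e2 \<Longrightarrow> Einv q x"
  using Tr0_inv unfolding Tr_def by blast

end


definition sact :: "real^2 \<Rightarrow> real^2" where "sact v = vector [- v$2, v$1]"
definition tact :: "nat \<Rightarrow> real^2 \<Rightarrow> real^2" where "tact q v = vector [v$1 + lambda_q q * v$2, v$2]"
definition tinv :: "nat \<Rightarrow> real^2 \<Rightarrow> real^2" where "tinv q v = vector [v$1 - lambda_q q * v$2, v$2]"

lemma sact_lin: "sact (a *\<^sub>R v + b *\<^sub>R w) = a *\<^sub>R sact v + b *\<^sub>R sact w"
  by (simp add: sact_def vec2_eq_iff algebra_simps)
lemma tact_lin: "tact q (a *\<^sub>R v + b *\<^sub>R w) = a *\<^sub>R tact q v + b *\<^sub>R tact q w"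
  by (simp add: tact_def vec2_eq_iff algebra_simps)
lemma tinv_lin: "tinv q (a *\<^sub>R v + b *\<^sub>R w) = a *\<^sub>R tinv q v + b *\<^sub>R tinv q w"
  by (simp add: tinv_def vec2_eq_iff algebra_simps)
lemma neg_lin: "- (a *\<^sub>R v + b *\<^sub>R w) = a *\<^sub>R (- v) + b *\<^sub>R (- (w::real^2))"
  by (simp add: algebra_simps)

lemma neg_vec: "- (vector [a, b] :: real^2) = vector [- a, - b]" by (simp add: vec2_eq_iff)

lemma sact_sact: "sact (sact v) = - v" by (simp add: sact_def vec2_eq_iff)
lemma sact_neg: "sact (- v) = - sact v" by (simp add: sact_def vec2_eq_iff)
lemma tact_neg: "tact q (- v) = - tact q v" by (simp add: tact_def vec2_eq_iff)
lemma tinv_neg: "tinv q (- v) = - tinv q v" by (simp add: tinv_def vec2_eq_iff)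

lemma Tr_sact: "Tr q (sact a) (sact b) = sact ` Tr q a b" by (rule Tr_map[OF sact_lin])
lemma Tr_tact: "Tr q (tact q a) (tact q b) = tact q ` Tr q a b" by (rule Tr_map[OF tact_lin])
lemma Tr_tinv: "Tr q (tinv q a) (tinv q b) = tinv q ` Tr q a b" by (rule Tr_map[OF tinv_lin])
lemma Tr_neg: "Tr q (- a) (- b) = uminus ` Tr q a b" by (rule Tr_map[of uminus, OF neg_lin])

definition Wset :: "nat \<Rightarrow> (real^2) set" where
  "Wset q = Tr q e1 e2 \<union> sact ` Tr q e1 e2 \<union> uminus ` Tr q e1 e2 \<union> sact ` uminus ` Tr q e1 e2"

lemma sact_e: "sact e1 = e2" "sact e2 = - e1" by (simp_all add: sact_def e1_def e2_def vec2_eq_iff)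

context fixes q :: nat assumes q3: "q \<ge> 3" begin

lemma cj_Tr: "j < q \<Longrightarrow> cj q a b j \<in> Tr q a b"
proof -
  assume "j < q"
  hence "cj q a b j \<in> set (SB_list q a b 1)" by (simp add: SB_list_def refine_pair[OF q3] blk_set[OF q3])
  thus ?thesis unfolding Tr_def by blast
qed

lemma pair_Tr: "Suc j < q \<Longrightarrow> Tr q (cj q a b j) (cj q a b (Suc j)) \<subseteq> Tr q a b"
  by (rule Tr_sub[OF q3]) (auto simp: blk_prs[OF q3])

lemma cj0_coords: "cj q e1 e2 i = vector [sq q (Suc i), sq q i]"
  using cjc[OF q3] by (simp add: vec2_eq_iff)

lemma W_sact: "sact ` Wset q \<subseteq> Wset q"
proof -
  have "sact ` sact ` X = uminus ` X" for X using sact_sact by (auto simp: image_iff)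
  moreover have "uminus ` uminus ` X = (X::(real^2) set)" for X
    by (auto simp: image_iff)
  ultimately show ?thesis unfolding Wset_def image_Un by (simp only:) blast
qed

lemma W_tact: "tact q ` Wset q \<subseteq> Wset q"
proof -
  let ?T = "Tr q e1 e2"
  have A: "tact q ` ?T \<subseteq> ?T"
  proof -
    have "tact q e1 = cj q e1 e2 0" "tact q e2 = cj q e1 e2 (Suc 0)"
      using cj0_coords s1[OF q3] s2[OF q3] s0[OF q3]
      by (simp_all add: tact_def e1_def e2_def vec2_eq_iff numeral_2_eq_2)
    hence "tact q ` ?T = Tr q (cj q e1 e2 0) (cj q e1 e2 (Suc 0))" by (metis Tr_tact)
    also have "\<dots> \<subseteq> ?T" using q3 by (intro pair_Tr) auto
    finally show ?thesis .
  qed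
  have B: "tact q ` sact ` ?T \<subseteq> ?T \<union> sact ` ?T"
  proof -
    let ?a = "vector [lambda_q q, 1] :: real^2"
    have "tact q ` sact ` ?T = tact q ` Tr q (sact e1) (sact e2)" by (simp add: Tr_sact)
    also have "\<dots> = Tr q ?a (- e1)"
      by (simp add: sact_e Tr_tact[symmetric], simp add: tact_def e1_def e2_def vec2_eq_iff neg_vec)
    also have "\<dots> \<subseteq> {?a, - e1} \<union> (\<Union>(v,w)\<in>prs (blk q ?a (- e1)). Tr q v w)" by (rule Tr_dec[OF q3])
    also have "\<dots> \<subseteq> ?T \<union> sact ` ?T"
    proof -
      have c: "cj q ?a (- e1) i = cj q e1 e2 (Suc i)" for i
        apply (simp only: vec2_eq_iff cjc[OF q3])
        using sq_rec[OF q3, of i] by (simp add: algebra_simps)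
      have a0: "?a = cj q e1 e2 (Suc 0)"
        apply (simp only: vec2_eq_iff cjc[OF q3])
        using sq_rec[OF q3, of 0] sq1[OF q3] sq0[OF q3] by simp
      have a: "?a \<in> ?T" unfolding a0 using q3 by (intro cj_Tr) auto
      have "e2 \<in> ?T" by (rule Tr_ends(2)[OF q3])
      hence b: "- e1 \<in> sact ` ?T" using sact_e by (metis image_eqI)
      have "Tr q v w \<subseteq> ?T \<union> sact ` ?T" if vw: "(v,w) \<in> prs (blk q ?a (- e1))" for v w
      proof -
        obtain j where j: "v = cj q e1 e2 (Suc j)" "w = cj q e1 e2 (Suc (Suc j))" "Suc j < q"
          using vw unfolding blk_prs[OF q3] c by blast
        show ?thesis
        proof (cases "Suc (Suc j) < q")
          case True thus ?thesis using pair_Tr[OF True] j by auto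
        next
          case False
          hence qq: "Suc (Suc j) = q" using j by simp
          hence qq2: "Suc j = q - 1" by simp
          have vv: "v = vector [sq q (Suc (Suc j)), sq q (Suc j)]" and ww: "w = vector [sq q (Suc (Suc (Suc j))), sq q (Suc (Suc j))]"
            unfolding j(1,2) by (rule cj0_coords)+
          hence "v = vector [sq q q, sq q (q - 1)]" "w = vector [sq q (Suc q), sq q q]"
          proof -
            have qs: "Suc (q - Suc 0) = q" using q3 by simp
            show "v = vector [sq q q, sq q (q - 1)]" "w = vector [sq q (Suc q), sq q q]"
              using vv ww unfolding qq2 by (simp_all add: qs)
          qed
          hence "v = sact e1" "w = sact e2"
            using sqm1[OF q3] sq_q[OF q3] sq_Sq[OF q3]
            by (simp_all add: sact_def e1_def e2_def)
          thus ?thesis using Tr_sact by auto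
        qed
      qed
      thus ?thesis using a b by blast
    qed
    finally show ?thesis .
  qed
  have N: "tact q ` uminus ` X = uminus ` tact q ` X" for X by (auto simp: image_iff tact_neg)
  have N2: "uminus ` sact ` X = sact ` uminus ` X" for X by (auto simp: image_iff sact_neg)
  have "tact q ` sact ` uminus ` ?T = uminus ` tact q ` sact ` ?T"
    by (auto simp: image_iff tact_neg sact_neg)
  also have "\<dots> \<subseteq> uminus ` ?T \<union> sact ` uminus ` ?T" using B N2 by blast
  finally have C: "tact q ` sact ` uminus ` ?T \<subseteq> uminus ` ?T \<union> sact ` uminus ` ?T" .
  show ?thesis unfolding Wset_def image_Un using A B C N[of ?T] by blast
qed

end


context fixes q :: nat assumes q3: "q \<ge> 3" begin

lemma W_tinv: "tinv q ` Wset q \<subseteq> Wset q"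
proof -
  let ?T = "Tr q e1 e2"
  let ?b = "vector [- lambda_q q, 1] :: real^2"
  have bs: "?b = sact (cj q e1 e2 (q - 2))"
  proof -
    have "Suc (q - 2) = q - 1" using q3 by simp
    hence "cj q e1 e2 (q - 2) = vector [1, lambda_q q]"
      using cj0_coords[OF q3, of "q-2"] sqm1[OF q3] sqm2[OF q3] by simp
    thus ?thesis by (simp add: sact_def)
  qed
  have cl: "cj q e1 e2 (Suc (q - 2)) = e2"
  proof -
    have "Suc (q - 2) = q - 1" using q3 by simp
    thus ?thesis using cjlast[OF q3, of e1 e2] by simp
  qed
  have A: "tinv q ` ?T \<subseteq> ?T \<union> sact ` ?T"
  proof -
    have "tinv q ` ?T = Tr q e1 ?b"
      by (simp add: Tr_tinv[symmetric], simp add: tinv_def e1_def e2_def)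
    also have "\<dots> \<subseteq> {e1, ?b} \<union> (\<Union>(v,w)\<in>prs (blk q e1 ?b). Tr q v w)" by (rule Tr_dec[OF q3])
    also have "\<dots> \<subseteq> ?T \<union> sact ` ?T"
    proof -
      have c: "cj q e1 ?b (Suc m) = sact (cj q e1 e2 m)" for m
        apply (simp only: vec2_eq_iff cjc[OF q3] sact_def)
        using sq_rec[OF q3, of m] by (simp add: algebra_simps)
      have c0: "cj q e1 ?b 0 = e1" by (rule cj0[OF q3])
      have c1: "cj q e1 ?b (Suc 0) = e2"
        using c[of 0] cj0[OF q3, of e1 e2] sact_e by simp
      have a: "e1 \<in> ?T" by (rule Tr_ends(1)[OF q3])
      have b: "?b \<in> sact ` ?T" unfolding bs using q3 by (intro imageI cj_Tr[OF q3]) simp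
      have "Tr q v w \<subseteq> ?T \<union> sact ` ?T" if vw: "(v,w) \<in> prs (blk q e1 ?b)" for v w
      proof -
        obtain j where j: "v = cj q e1 ?b j" "w = cj q e1 ?b (Suc j)" "Suc j < q"
          using vw unfolding blk_prs[OF q3] by blast
        show ?thesis
        proof (cases j)
          case 0 thus ?thesis using j c0 c1 by simp
        next
          case (Suc m)
          have "Tr q v w = sact ` Tr q (cj q e1 e2 m) (cj q e1 e2 (Suc m))"
            unfolding j(1,2) Suc c by (rule Tr_sact)
          also have "\<dots> \<subseteq> sact ` ?T" using j(3) Suc by (intro image_mono pair_Tr[OF q3]) simp
          finally show ?thesis by blast
        qed
      qed
      thus ?thesis using a b by blast
    qed
    finally show ?thesis .
  qed
  have B: "tinv q ` sact ` ?T \<subseteq> sact ` ?T"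
  proof -
    have "tinv q ` sact ` ?T = tinv q ` Tr q (sact e1) (sact e2)" by (simp add: Tr_sact)
    also have "\<dots> = Tr q ?b (- e1)"
      by (simp add: sact_e Tr_tinv[symmetric], simp add: tinv_def e1_def e2_def vec2_eq_iff neg_vec)
    also have "\<dots> = sact ` Tr q (cj q e1 e2 (q - 2)) (cj q e1 e2 (Suc (q - 2)))"
      unfolding bs cl sact_e(2)[symmetric] by (rule Tr_sact)
    also have "\<dots> \<subseteq> sact ` ?T" using q3 by (intro image_mono pair_Tr[OF q3]) simp
    finally show ?thesis .
  qed
  have N: "tinv q ` uminus ` X = uminus ` tinv q ` X" for X by (auto simp: image_iff tinv_neg)
  have N2: "uminus ` sact ` X = sact ` uminus ` X" for X by (auto simp: image_iff sact_neg)
  have "tinv q ` sact ` uminus ` ?T = uminus ` tinv q ` sact ` ?T"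
    by (auto simp: image_iff tinv_neg sact_neg)
  also have "\<dots> \<subseteq> sact ` uminus ` ?T" using B N2 by blast
  finally have C: "tinv q ` sact ` uminus ` ?T \<subseteq> sact ` uminus ` ?T" .
  have "tinv q ` uminus ` ?T = uminus ` tinv q ` ?T" by (rule N)
  also have "\<dots> \<subseteq> uminus ` (?T \<union> sact ` ?T)" using A by (rule image_mono)
  also have "\<dots> = uminus ` ?T \<union> sact ` uminus ` ?T" by (simp add: image_Un N2)
  finally have D: "tinv q ` uminus ` ?T \<subseteq> uminus ` ?T \<union> sact ` uminus ` ?T" .
  show ?thesis unfolding Wset_def image_Un
    by (intro Un_least; insert A B C D; blast)
qed

lemma Lambda_W: "Lambda_q q \<subseteq> Wset q"
proof
  fix x assume "x \<in> Lambda_q q"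
  then obtain M where M: "M \<in> hecke_group q" "x = M *v e1" by (auto simp: Lambda_q_def)
  have "M *v e1 \<in> Wset q" using M(1)
  proof (induction rule: hecke_group.induct)
    case id_in
    have "e1 \<in> Tr q e1 e2" by (rule Tr_ends(1)[OF q3])
    thus ?case by (simp add: Wset_def)
  next
    case (S_in M)
    have "S_mat ** M *v e1 = sact (M *v e1)"
      by (simp add: matrix_vector_mul_assoc[symmetric] S_act sact_def)
    thus ?case using S_in W_sact[OF q3] by auto
  next
    case (S_inv_in M)
    have "matrix_inv S_mat ** M *v e1 = sact (sact (sact (M *v e1)))"
      by (simp add: matrix_vector_mul_assoc[symmetric] Sinv_act sact_def)
    moreover have "\<And>y. y \<in> Wset q \<Longrightarrow> sact y \<in> Wset q" using W_sact[OF q3] by auto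
    ultimately show ?case using S_inv_in by simp
  next
    case (T_in M)
    have "T_mat q ** M *v e1 = tact q (M *v e1)"
      by (simp add: matrix_vector_mul_assoc[symmetric] T_act tact_def)
    thus ?case using T_in W_tact[OF q3] by auto
  next
    case (T_inv_in M)
    have "matrix_inv (T_mat q) ** M *v e1 = tinv q (M *v e1)"
      by (simp add: matrix_vector_mul_assoc[symmetric] Tinv_act tinv_def)
    thus ?case using T_inv_in W_tinv by auto
  qed
  thus "x \<in> Wset q" using M by simp
qed

lemma W_y1: assumes "x \<in> Wset q" "x$2 = 1" shows "\<exists>k::int. x = vector [of_int k * lambda_q q, 1]"
proof -
  let ?T = "Tr q e1 e2"
  from assms(1) consider "x \<in> ?T" | y where "y \<in> ?T" "x = sact y" | y where "y \<in> ?T" "x = - y"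
    | y where "y \<in> ?T" "x = sact (- y)" unfolding Wset_def by blast
  thus ?thesis
  proof cases
    case 1
    then obtain k :: nat where "x$1 = real k * lambda_q q" using Tr0_E[OF q3 1] assms(2) unfolding Einv_def by blast
    thus ?thesis using assms(2) by (intro exI[of _ "int k"]) (simp add: vec2_eq_iff)
  next
    case (2 y)
    have "y$1 = 1" using 2 assms(2) by (simp add: sact_def)
    then obtain k :: nat where "y$2 = real k * lambda_q q" using Tr0_E[OF q3 2(1)] unfolding Einv_def by blast
    thus ?thesis using 2 assms(2) by (intro exI[of _ "- int k"]) (simp add: vec2_eq_iff sact_def)
  next
    case (3 y)
    have "0 \<le> y$2" using Tr0_E[OF q3 3(1)] unfolding Einv_def by blast
    thus ?thesis using 3 assms(2) by simp
  next
    case (4 y)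
    have "0 \<le> y$1" using Tr0_E[OF q3 4(1)] unfolding Einv_def by blast
    thus ?thesis using 4 assms(2) by (simp add: sact_def)
  qed
qed

lemma W_quad: assumes "x \<in> Wset q" "0 \<le> x$1" "0 \<le> x$2" shows "x \<in> Tr q e1 e2"
proof -
  let ?T = "Tr q e1 e2"
  have e2T: "e2 \<in> ?T" by (rule Tr_ends(2)[OF q3])
  have e1T: "e1 \<in> ?T" by (rule Tr_ends(1)[OF q3])
  from assms(1) consider "x \<in> ?T" | y where "y \<in> ?T" "x = sact y" | y where "y \<in> ?T" "x = - y"
    | y where "y \<in> ?T" "x = sact (- y)" unfolding Wset_def by blast
  thus ?thesis
  proof cases
    case 1 thus ?thesis .
  next
    case (2 y)
    have E: "Einv q y" using Tr0_E[OF q3 2(1)] .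
    hence "y$2 = 0" using 2 assms by (simp add: sact_def Einv_def)
    hence "y = e1" using E by (simp add: Einv_def)
    thus ?thesis using 2 e2T sact_e by simp
  next
    case (3 y)
    have E: "Einv q y" using Tr0_E[OF q3 3(1)] .
    hence "y$1 = 0" using 3 assms by (simp add: Einv_def)
    hence "y = e2" using E by (simp add: Einv_def)
    thus ?thesis using 3 assms by simp
  next
    case (4 y)
    have E: "Einv q y" using Tr0_E[OF q3 4(1)] .
    hence "y$1 = 0" using 4 assms by (simp add: sact_def Einv_def)
    hence "y = e2" using E by (simp add: Einv_def)
    hence "x = e1" using 4 by (simp add: sact_def e1_def e2_def vec2_eq_iff)
    thus ?thesis using e1T by simp
  qed
qed

end


lemma mv_lin: "(M::real^2^2) *v (a *\<^sub>R v + b *\<^sub>R w) = a *\<^sub>R (M *v v) + b *\<^sub>R (M *v w)"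
  by (simp add: vec2_eq_iff matrix_vector_mult_def sum_2 algebra_simps)

lemma S_sact: "S_mat *v v = sact v" by (simp add: S_act sact_def)
lemma Sinv_sact: "matrix_inv S_mat *v v = sact (sact (sact v))" by (simp add: Sinv_act sact_def)
lemma T_tact: "T_mat q *v v = tact q v" by (simp add: T_act tact_def)
lemma Tinv_tinv: "matrix_inv (T_mat q) *v v = tinv q v" by (simp add: Tinv_act tinv_def)

lemma sact4: "sact (sact (sact (sact v))) = v" by (simp add: sact_def vec2_eq_iff)
lemma tact_tinv: "tact q (tinv q v) = v" "tinv q (tact q v) = v" by (simp_all add: tact_def tinv_def vec2_eq_iff)

lemma wedge_sact: "wedge (sact v) (sact w) = wedge v w" by (simp add: wedge_def sact_def algebra_simps)
lemma wedge_tact: "wedge (tact q v) (tact q w) = wedge v w" by (simp add: wedge_def tact_def algebra_simps)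
lemma wedge_tinv: "wedge (tinv q v) (tinv q w) = wedge v w" by (simp add: wedge_def tinv_def algebra_simps)

lemma Lam_gen: assumes "v \<in> Lambda_q q"
  shows "sact v \<in> Lambda_q q" "sact (sact (sact v)) \<in> Lambda_q q" "tact q v \<in> Lambda_q q" "tinv q v \<in> Lambda_q q"
proof -
  obtain M where M: "M \<in> hecke_group q" "v = M *v e1" using assms by (auto simp: Lambda_q_def)
  have "S_mat ** M \<in> hecke_group q" "matrix_inv S_mat ** M \<in> hecke_group q"
    "T_mat q ** M \<in> hecke_group q" "matrix_inv (T_mat q) ** M \<in> hecke_group q"
    using M(1) by (auto intro: hecke_group.intros)
  moreover have "(S_mat ** M) *v e1 = sact v" "(matrix_inv S_mat ** M) *v e1 = sact (sact (sact v))"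
    "(T_mat q ** M) *v e1 = tact q v" "(matrix_inv (T_mat q) ** M) *v e1 = tinv q v"
    using M(2) by (simp_all add: matrix_vector_mul_assoc[symmetric] S_sact Sinv_sact T_tact Tinv_tinv)
  ultimately show "sact v \<in> Lambda_q q" "sact (sact (sact v)) \<in> Lambda_q q" "tact q v \<in> Lambda_q q" "tinv q v \<in> Lambda_q q"
    unfolding Lambda_q_def by (metis (mono_tags, lifting) mem_Collect_eq)+
qed

lemma G_act: "M \<in> hecke_group q \<Longrightarrow> x \<in> Lambda_q q \<Longrightarrow> M *v x \<in> Lambda_q q"
proof (induction rule: hecke_group.induct)
  case id_in thus ?case by simp
next
  case (S_in M) thus ?case by (simp add: matrix_vector_mul_assoc[symmetric] S_sact Lam_gen)
next
  case (S_inv_in M) thus ?case by (simp add: matrix_vector_mul_assoc[symmetric] Sinv_sact Lam_gen)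
next
  case (T_in M) thus ?case by (simp add: matrix_vector_mul_assoc[symmetric] T_tact Lam_gen)
next
  case (T_inv_in M) thus ?case by (simp add: matrix_vector_mul_assoc[symmetric] Tinv_tinv Lam_gen)
qed

lemma G_rev: "M \<in> hecke_group q \<Longrightarrow> M *v x \<in> Lambda_q q \<Longrightarrow> x \<in> Lambda_q q"
proof (induction rule: hecke_group.induct)
  case id_in thus ?case by simp
next
  case (S_in M)
  hence "sact (M *v x) \<in> Lambda_q q" by (simp add: matrix_vector_mul_assoc[symmetric] S_sact)
  hence "sact (sact (sact (sact (M *v x)))) \<in> Lambda_q q" by (rule Lam_gen)
  thus ?case using S_in by (simp add: sact4)
next
  case (S_inv_in M)
  hence "sact (sact (sact (M *v x))) \<in> Lambda_q q" by (simp add: matrix_vector_mul_assoc[symmetric] Sinv_sact)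
  hence "sact (sact (sact (sact (M *v x)))) \<in> Lambda_q q" by (rule Lam_gen)
  thus ?case using S_inv_in by (simp add: sact4)
next
  case (T_in M)
  hence "tact q (M *v x) \<in> Lambda_q q" by (simp add: matrix_vector_mul_assoc[symmetric] T_tact)
  hence "tinv q (tact q (M *v x)) \<in> Lambda_q q" by (rule Lam_gen)
  thus ?case using T_in by (simp add: tact_tinv)
next
  case (T_inv_in M)
  hence "tinv q (M *v x) \<in> Lambda_q q" by (simp add: matrix_vector_mul_assoc[symmetric] Tinv_tinv)
  hence "tact q (tinv q (M *v x)) \<in> Lambda_q q" by (rule Lam_gen)
  thus ?case using T_inv_in by (simp add: tact_tinv)
qed

lemma G_wedge: "M \<in> hecke_group q \<Longrightarrow> wedge (M *v v) (M *v w) = wedge v w"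
proof (induction rule: hecke_group.induct)
  case id_in thus ?case by simp
next
  case (S_in M) thus ?case by (simp add: matrix_vector_mul_assoc[symmetric] S_sact wedge_sact)
next
  case (S_inv_in M) thus ?case by (simp add: matrix_vector_mul_assoc[symmetric] Sinv_sact wedge_sact)
next
  case (T_in M) thus ?case by (simp add: matrix_vector_mul_assoc[symmetric] T_tact wedge_tact)
next
  case (T_inv_in M) thus ?case by (simp add: matrix_vector_mul_assoc[symmetric] Tinv_tinv wedge_tinv)
qed

lemma Tpow: "\<exists>g\<in>hecke_group q. g *v e1 = e1 \<and> g *v e2 = vector [real n * lambda_q q, 1]
   \<and> (\<exists>h\<in>hecke_group q. h *v e1 = e1 \<and> h *v e2 = vector [- real n * lambda_q q, 1])"
proof (induction n)
  case 0
  have "mat 1 \<in> hecke_group q" by (rule hecke_group.id_in)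
  thus ?case by (auto simp: e2_def intro!: bexI[of _ "mat 1"])
next
  case (Suc n)
  then obtain g h where g: "g \<in> hecke_group q" "g *v e1 = e1" "g *v e2 = vector [real n * lambda_q q, 1]"
    and h: "h \<in> hecke_group q" "h *v e1 = e1" "h *v e2 = vector [- real n * lambda_q q, 1]" by blast
  have "T_mat q ** g \<in> hecke_group q" "matrix_inv (T_mat q) ** h \<in> hecke_group q"
    using g(1) h(1) by (auto intro: hecke_group.intros)
  moreover have "(T_mat q ** g) *v e1 = e1" "(T_mat q ** g) *v e2 = vector [real (Suc n) * lambda_q q, 1]"
    "(matrix_inv (T_mat q) ** h) *v e1 = e1" "(matrix_inv (T_mat q) ** h) *v e2 = vector [- real (Suc n) * lambda_q q, 1]"
    using g h by (simp_all add: matrix_vector_mul_assoc[symmetric] T_tact Tinv_tinv tact_def tinv_def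
        vec2_eq_iff algebra_simps)
  ultimately show ?case by blast
qed

lemma Tint: "\<exists>g\<in>hecke_group q. g *v e1 = e1 \<and> g *v e2 = vector [of_int k * lambda_q q, 1]"
proof (cases "k \<ge> 0")
  case True
  then obtain n where "k = int n" by (metis nonneg_eq_int)
  thus ?thesis using Tpow[of q n] by auto
next
  case False
  then obtain n where "k = - int n" by (metis le_cases neg_0_le_iff_le nonneg_eq_int minus_minus)
  thus ?thesis using Tpow[of q n] by auto
qed

context fixes q :: nat assumes q3: "q \<ge> 3" begin

lemma thmB: "M \<in> hecke_group q \<Longrightarrow> \<forall>w. w \<in> Lambda_q q \<longrightarrow> wedge (M *v e1) w = 1 \<longrightarrow>
    (\<exists>g\<in>hecke_group q. g *v e1 = M *v e1 \<and> g *v e2 = w)"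
proof (induction rule: hecke_group.induct)
  case id_in
  show ?case
  proof (intro allI impI)
    fix w assume w: "w \<in> Lambda_q q" "wedge (mat 1 *v e1) w = 1"
    have "w$2 = 1" using w(2) by (simp add: wedge_def)
    moreover have "w \<in> Wset q" using w(1) Lambda_W[OF q3] by blast
    ultimately obtain k where "w = vector [of_int k * lambda_q q, 1]" using W_y1[OF q3] by blast
    thus "\<exists>g\<in>hecke_group q. g *v e1 = mat 1 *v e1 \<and> g *v e2 = w" using Tint[of q k] by auto
  qed
next
  case (S_in M)
  show ?case
  proof (intro allI impI)
    fix w assume w: "w \<in> Lambda_q q" "wedge (S_mat ** M *v e1) w = 1"
    let ?w = "sact (sact (sact w))"
    have "?w \<in> Lambda_q q" using w(1) by (rule Lam_gen)
    moreover have "wedge (M *v e1) ?w = 1"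
      using w(2) wedge_sact[of "M *v e1" ?w] sact4[of w]
      by (simp add: matrix_vector_mul_assoc[symmetric] S_sact)
    ultimately obtain g where g: "g \<in> hecke_group q" "g *v e1 = M *v e1" "g *v e2 = ?w" using S_in.IH by blast
    have "S_mat ** g \<in> hecke_group q" using g(1) by (rule hecke_group.S_in)
    moreover have "(S_mat ** g) *v e1 = S_mat ** M *v e1" "(S_mat ** g) *v e2 = w"
      using g by (simp_all add: matrix_vector_mul_assoc[symmetric] S_sact sact4)
    ultimately show "\<exists>g\<in>hecke_group q. g *v e1 = S_mat ** M *v e1 \<and> g *v e2 = w" by blast
  qed
next
  case (S_inv_in M)
  show ?case
  proof (intro allI impI)
    fix w assume w: "w \<in> Lambda_q q" "wedge (matrix_inv S_mat ** M *v e1) w = 1"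
    let ?w = "sact w"
    have "?w \<in> Lambda_q q" using w(1) by (rule Lam_gen)
    moreover have "wedge (M *v e1) ?w = 1"
    proof -
      have "wedge (sact (sact (sact (M *v e1)))) w = 1" using w(2)
        by (simp add: matrix_vector_mul_assoc[symmetric] Sinv_sact)
      hence "wedge (sact (sact (sact (sact (M *v e1))))) (sact w) = 1" by (simp add: wedge_sact)
      thus ?thesis by (simp add: sact4)
    qed
    ultimately obtain g where g: "g \<in> hecke_group q" "g *v e1 = M *v e1" "g *v e2 = ?w" using S_inv_in.IH by blast
    have "matrix_inv S_mat ** g \<in> hecke_group q" using g(1) by (rule hecke_group.S_inv_in)
    moreover have "(matrix_inv S_mat ** g) *v e1 = matrix_inv S_mat ** M *v e1" "(matrix_inv S_mat ** g) *v e2 = w"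
      using g by (simp_all add: matrix_vector_mul_assoc[symmetric] Sinv_sact sact4)
    ultimately show "\<exists>g\<in>hecke_group q. g *v e1 = matrix_inv S_mat ** M *v e1 \<and> g *v e2 = w" by blast
  qed
next
  case (T_in M)
  show ?case
  proof (intro allI impI)
    fix w assume w: "w \<in> Lambda_q q" "wedge (T_mat q ** M *v e1) w = 1"
    let ?w = "tinv q w"
    have "?w \<in> Lambda_q q" using w(1) by (rule Lam_gen)
    moreover have "wedge (M *v e1) ?w = 1"
    proof -
      have "wedge (tact q (M *v e1)) w = 1" using w(2)
        by (simp add: matrix_vector_mul_assoc[symmetric] T_tact)
      hence "wedge (tinv q (tact q (M *v e1))) (tinv q w) = 1" by (simp add: wedge_tinv)
      thus ?thesis by (simp add: tact_tinv)
    qed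
    ultimately obtain g where g: "g \<in> hecke_group q" "g *v e1 = M *v e1" "g *v e2 = ?w" using T_in.IH by blast
    have "T_mat q ** g \<in> hecke_group q" using g(1) by (rule hecke_group.T_in)
    moreover have "(T_mat q ** g) *v e1 = T_mat q ** M *v e1" "(T_mat q ** g) *v e2 = w"
      using g by (simp_all add: matrix_vector_mul_assoc[symmetric] T_tact tact_tinv)
    ultimately show "\<exists>g\<in>hecke_group q. g *v e1 = T_mat q ** M *v e1 \<and> g *v e2 = w" by blast
  qed
next
  case (T_inv_in M)
  show ?case
  proof (intro allI impI)
    fix w assume w: "w \<in> Lambda_q q" "wedge (matrix_inv (T_mat q) ** M *v e1) w = 1"
    let ?w = "tact q w"
    have "?w \<in> Lambda_q q" using w(1) by (rule Lam_gen)
    moreover have "wedge (M *v e1) ?w = 1"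
    proof -
      have "wedge (tinv q (M *v e1)) w = 1" using w(2)
        by (simp add: matrix_vector_mul_assoc[symmetric] Tinv_tinv)
      hence "wedge (tact q (tinv q (M *v e1))) (tact q w) = 1" by (simp add: wedge_tact)
      thus ?thesis by (simp add: tact_tinv)
    qed
    ultimately obtain g where g: "g \<in> hecke_group q" "g *v e1 = M *v e1" "g *v e2 = ?w" using T_inv_in.IH by blast
    have "matrix_inv (T_mat q) ** g \<in> hecke_group q" using g(1) by (rule hecke_group.T_inv_in)
    moreover have "(matrix_inv (T_mat q) ** g) *v e1 = matrix_inv (T_mat q) ** M *v e1" "(matrix_inv (T_mat q) ** g) *v e2 = w"
      using g by (simp_all add: matrix_vector_mul_assoc[symmetric] Tinv_tinv tact_tinv)
    ultimately show "\<exists>g\<in>hecke_group q. g *v e1 = matrix_inv (T_mat q) ** M *v e1 \<and> g *v e2 = w" by blast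
  qed
qed

lemma thmB': assumes "v \<in> Lambda_q q" "w \<in> Lambda_q q" "wedge v w = 1"
  shows "\<exists>g\<in>hecke_group q. g *v e1 = v \<and> g *v e2 = w"
proof -
  obtain M where M: "M \<in> hecke_group q" "v = M *v e1" using assms(1) by (auto simp: Lambda_q_def)
  show ?thesis using thmB[OF M(1)] assms M(2) by blast
qed

end


lemma xy_Lam: "xy_q q j \<in> Lambda_q q"
proof (induction j)
  case 0
  have "mat 1 \<in> hecke_group q" by (rule hecke_group.id_in)
  hence "mat 1 *v e1 \<in> Lambda_q q" unfolding Lambda_q_def by blast
  thus ?case by (simp add: xy_q_def)
next
  case (Suc j)
  have "xy_q q (Suc j) = tact q (sact (xy_q q j))"
    by (simp add: xy_q_def U_mat_def matrix_vector_mul_assoc[symmetric] T_tact S_sact)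
  thus ?case using Suc Lam_gen by simp
qed

lemma xy_wedge: "wedge (xy_q q j) (xy_q q (Suc j)) = 1"
proof (induction j)
  case 0
  show ?case by (simp add: xy_q_def U_mat_def matrix_vector_mul_assoc[symmetric] T_tact S_sact
      tact_def sact_def wedge_def e1_def)
next
  case (Suc j)
  have e: "\<And>i. xy_q q (Suc i) = tact q (sact (xy_q q i))"
    by (simp add: xy_q_def U_mat_def matrix_vector_mul_assoc[symmetric] T_tact S_sact)
  show ?case using Suc by (simp only: e[of "Suc j"] e[of j] wedge_tact wedge_sact)
qed

lemma cj_xy: "cj q e1 e2 j = xy_q q j"
  by (simp add: cj_def x_q_def y_q_def vec2_eq_iff)

lemma sector_comb: "v \<in> sector u0 u1 \<Longrightarrow> w \<in> sector u0 u1 \<Longrightarrow> 0 \<le> x \<Longrightarrow> 0 \<le> y \<Longrightarrow>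
   x *\<^sub>R v + y *\<^sub>R w \<in> sector u0 u1"
proof -
  assume "v \<in> sector u0 u1" "w \<in> sector u0 u1" and xy: "0 \<le> x" "0 \<le> y"
  then obtain a b a' b' where "v = a *\<^sub>R u0 + b *\<^sub>R u1" "w = a' *\<^sub>R u0 + b' *\<^sub>R u1"
    "0 \<le> a" "0 \<le> b" "0 \<le> a'" "0 \<le> b'" unfolding sector_def by blast
  moreover have "x *\<^sub>R (a *\<^sub>R u0 + b *\<^sub>R u1) + y *\<^sub>R (a' *\<^sub>R u0 + b' *\<^sub>R u1)
     = (x * a + y * a') *\<^sub>R u0 + (x * b + y * b') *\<^sub>R u1" by (simp add: algebra_simps)
  ultimately show ?thesis using xy unfolding sector_def
    by (smt (verit, best) mem_Collect_eq mult_nonneg_nonneg)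
qed

theorem mainTheorem2:
  fixes q :: nat and u0 u1 :: "real^2"
  assumes "q \<ge> 3"
    and "u0 \<in> Lambda_q q" and "u1 \<in> Lambda_q q"
    and "wedge u0 u1 = 1"
  shows "(\<forall>n. (\<forall>v \<in> set (SB_list q u0 u1 n). v \<in> Lambda_q q \<and> v \<in> sector u0 u1)
            \<and> (\<forall>i. Suc i < length (SB_list q u0 u1 n) \<longrightarrow>
                   wedge (SB_list q u0 u1 n ! i) (SB_list q u0 u1 n ! Suc i) = 1))
       \<and> (\<forall>v \<in> Lambda_q q. v \<in> sector u0 u1 \<longrightarrow> (\<exists>n. v \<in> set (SB_list q u0 u1 n)))"
proof -
  note q3 = assms(1)
  obtain g where g: "g \<in> hecke_group q" "g *v e1 = u0" "g *v e2 = u1"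
    using thmB'[OF q3 assms(2-4)] by blast
  define Q where "Q = (\<lambda>v w. v \<in> Lambda_q q \<and> w \<in> Lambda_q q \<and> wedge v w = 1
      \<and> v \<in> sector u0 u1 \<and> w \<in> sector u0 u1)"
  have inv: "2 \<le> length (SB_list q u0 u1 n) \<and> (\<forall>p\<in>prs (SB_list q u0 u1 n). Q (fst p) (snd p))" for n
  proof (induction n)
    case 0
    have "u0 \<in> sector u0 u1" unfolding sector_def
      by (rule CollectI, rule exI[of _ 1], rule exI[of _ 0]) simp
    moreover have "u1 \<in> sector u0 u1" unfolding sector_def
      by (rule CollectI, rule exI[of _ 0], rule exI[of _ 1]) simp
    ultimately show ?case using assms by (simp add: SB_list_def Q_def)
  next
    case (Suc n)
    let ?xs = "SB_list q u0 u1 n"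
    have eq: "SB_list q u0 u1 (Suc n) = refine q ?xs" by (simp add: SB_list_def)
    have K: "prs (refine q ?xs) = (\<Union>(v,w)\<in>prs ?xs. prs (blk q v w))"
      using refine_key[OF q3] Suc.IH by auto
    have "\<forall>p\<in>prs (refine q ?xs). Q (fst p) (snd p)"
    proof
      fix p assume "p \<in> prs (refine q ?xs)"
      then obtain v w where vw: "(v,w) \<in> prs ?xs" "p \<in> prs (blk q v w)" using K by auto
      then obtain j where p: "p = (cj q v w j, cj q v w (Suc j))" "Suc j < q" by (auto simp: blk_prs[OF q3])
      have Qvw: "Q v w" using Suc.IH vw(1) by auto
      then obtain h where h: "h \<in> hecke_group q" "h *v e1 = v" "h *v e2 = w"
        using thmB'[OF q3] unfolding Q_def by blast
      have c: "cj q v w i = h *v xy_q q i" for i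
        using h by (simp add: cj_xy[symmetric] cj_def mv_lin)
      have "cj q v w i \<in> sector u0 u1" if "i < q" for i
      proof -
        have "0 \<le> x_q q i" "0 \<le> y_q q i" using that q3 by (simp_all add: x_sq y_sq sq_ge0)
        thus ?thesis unfolding cj_def using Qvw sector_comb unfolding Q_def by blast
      qed
      moreover have "cj q v w i \<in> Lambda_q q" for i unfolding c using h(1) xy_Lam by (rule G_act)
      moreover have "wedge (cj q v w j) (cj q v w (Suc j)) = 1"
        unfolding c G_wedge[OF h(1)] by (rule xy_wedge)
      ultimately show "Q (fst p) (snd p)" using p unfolding Q_def by simp
    qed
    thus ?case using eq refine_len[OF q3] Suc.IH by simp
  qed
  have P1: "(\<forall>v \<in> set (SB_list q u0 u1 n). v \<in> Lambda_q q \<and> v \<in> sector u0 u1)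
            \<and> (\<forall>i. Suc i < length (SB_list q u0 u1 n) \<longrightarrow>
                   wedge (SB_list q u0 u1 n ! i) (SB_list q u0 u1 n ! Suc i) = 1)" for n
  proof
    show "\<forall>v \<in> set (SB_list q u0 u1 n). v \<in> Lambda_q q \<and> v \<in> sector u0 u1"
    proof
      fix v assume "v \<in> set (SB_list q u0 u1 n)"
      then obtain a b where "(a,b) \<in> prs (SB_list q u0 u1 n)" "v = a \<or> v = b"
        using set_prs inv[of n] by blast
      thus "v \<in> Lambda_q q \<and> v \<in> sector u0 u1" using inv[of n] unfolding Q_def by auto
    qed
    show "\<forall>i. Suc i < length (SB_list q u0 u1 n) \<longrightarrow>
                   wedge (SB_list q u0 u1 n ! i) (SB_list q u0 u1 n ! Suc i) = 1"
      using inv[of n] prs_nth unfolding Q_def by fastforce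
  qed
  have P2: "\<exists>n. v \<in> set (SB_list q u0 u1 n)" if v: "v \<in> Lambda_q q" "v \<in> sector u0 u1" for v
  proof -
    obtain a b where ab: "v = a *\<^sub>R u0 + b *\<^sub>R u1" "0 \<le> a" "0 \<le> b"
      using v(2) unfolding sector_def by blast
    define x where "x = a *\<^sub>R e1 + b *\<^sub>R e2"
    have gx: "g *v x = v" unfolding x_def mv_lin g ab(1) ..
    have "x \<in> Lambda_q q" using G_rev[OF g(1)] gx v(1) by simp
    hence "x \<in> Wset q" using Lambda_W[OF q3] by blast
    moreover have "0 \<le> x$1" "0 \<le> x$2" using ab by (simp_all add: x_def)
    ultimately have "x \<in> Tr q e1 e2" by (rule W_quad[OF q3])
    then obtain n where n: "x \<in> set (SB_list q e1 e2 n)" unfolding Tr_def by blast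
    have "SB_list q (g *v e1) (g *v e2) n = map ((*v) g) (SB_list q e1 e2 n)"
      by (rule SB_map) (rule mv_lin)
    hence "v \<in> set (SB_list q u0 u1 n)" using n gx g by auto
    thus ?thesis by blast
  qed
  show ?thesis using P1 P2 by blast
qed


end
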